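(* Let $A$ and $B$ be bounded operators on a Banach space $\mathcal{Y}$ such that $(e^{tB})_{t\in\mathbb{R}}$ is a one-parameter group of isometries of $\mathcal{Y}$ and the norm limit $$A^\natural=\lim_{t\to\infty}t^{-1}\int_0^tdu\,e^{-uB}Ae^{uB}$$ exists. Let $D(\cdot),E(\cdot)$ be continuously differentiable functions $\mathbb{R}\to\mathcal{B}(\mathcal{Y})$. Then for every $\tau>0$, with limits in the operator norm of $\mathcal{B}(\mathcal{Y})$: (1) $\displaystyle\lim_{\varepsilon\to0}\int_0^\tau d\tau_1\,D(\tau_1)e^{-(\tau_1/\varepsilon)B}Ae^{(\tau_1/\varepsilon)B}E(\tau_1)=\int_0^\tau d\tau_1\,D(\tau_1)A^\natural E(\tau_1)$; (2) $\displaystyle\lim_{\varepsilon\to0}e^{-(\tau/\varepsilon)B}e^{(\tau/\varepsilon)(B+\varepsilon A)}=\lim_{\varepsilon\to0}e^{(\tau/\varepsilon)(B+\varepsilon A)}e^{-(\tau/\varepsilon)B}=e^{\tau A^\natural}$.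
   Context: $\mathcal{B}(\mathcal{Y})$ denotes the Banach algebra of bounded operators on $\mathcal{Y}$ with the operator norm. *)

theory Defs
  imports "HOL-Analysis.Analysis"
begin

primrec op_pow :: "('a::real_normed_vector \<Rightarrow>\<^sub>L 'a) \<Rightarrow> nat \<Rightarrow> ('a \<Rightarrow>\<^sub>L 'a)" where
  "op_pow B 0 = id_blinfun"
| "op_pow B (Suc n) = B o\<^sub>L op_pow B n"

definition op_exp :: "('a::banach \<Rightarrow>\<^sub>L 'a) \<Rightarrow> ('a \<Rightarrow>\<^sub>L 'a)" where
  "op_exp B = (\<Sum>n. (1 / fact n) *\<^sub>R op_pow B n)"

end

theory Submission
  imports Defs
begin

typedef (overloaded) 'a opr = "UNIV :: (('a::banach \<Rightarrow>\<^sub>L 'a) \<times> real) set"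
  morphisms rep absr by auto

setup_lifting type_definition_opr

instantiation opr :: (banach) real_normed_algebra_1
begin
lift_definition zero_opr :: "'a opr" is "(0, 0)" .
lift_definition one_opr :: "'a opr" is "(id_blinfun, 1)" .
lift_definition plus_opr :: "'a opr \<Rightarrow> 'a opr \<Rightarrow> 'a opr" is "\<lambda>p q. (fst p + fst q, snd p + snd q)" .
lift_definition minus_opr :: "'a opr \<Rightarrow> 'a opr \<Rightarrow> 'a opr" is "\<lambda>p q. (fst p - fst q, snd p - snd q)" .
lift_definition uminus_opr :: "'a opr \<Rightarrow> 'a opr" is "\<lambda>p. (- fst p, - snd p)" .
lift_definition scaleR_opr :: "real \<Rightarrow> 'a opr \<Rightarrow> 'a opr" is "\<lambda>r p. (r *\<^sub>R fst p, r * snd p)" .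
lift_definition times_opr :: "'a opr \<Rightarrow> 'a opr \<Rightarrow> 'a opr" is "\<lambda>p q. (fst p o\<^sub>L fst q, snd p * snd q)" .
lift_definition norm_opr :: "'a opr \<Rightarrow> real" is "\<lambda>p. max (norm (fst p)) \<bar>snd p\<bar>" .
definition dist_opr :: "'a opr \<Rightarrow> 'a opr \<Rightarrow> real" where "dist_opr a b = norm (a - b)"
definition sgn_opr :: "'a opr \<Rightarrow> 'a opr" where "sgn_opr x = scaleR (inverse (norm x)) x"
definition uniformity_opr :: "('a opr \<times> 'a opr) filter" where
  "uniformity_opr = (INF e\<in>{0 <..}. principal {(x, y). dist x y < e})"
definition open_opr :: "'a opr set \<Rightarrow> bool" where
  "open_opr S = (\<forall>x\<in>S. \<forall>\<^sub>F (x', y) in uniformity. x' = x \<longrightarrow> y \<in> S)"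
instance
proof
  fix a b c :: "'a opr" and r s :: real
  show "a + b + c = a + (b + c)" by transfer (simp add: algebra_simps)
  show "a + b = b + a" by transfer (simp add: algebra_simps)
  show "0 + a = a" by transfer simp
  show "- a + a = 0" by transfer simp
  show "a - b = a + - b" by transfer simp
  show "r *\<^sub>R (a + b) = r *\<^sub>R a + r *\<^sub>R b" by transfer (simp add: algebra_simps)
  show "(r + s) *\<^sub>R a = r *\<^sub>R a + s *\<^sub>R a" by transfer (simp add: algebra_simps)
  show "r *\<^sub>R s *\<^sub>R a = (r * s) *\<^sub>R a" by transfer simp
  show "1 *\<^sub>R a = a" by transfer simp
  show "a * b * c = a * (b * c)" by transfer (auto intro!: blinfun_eqI)
  show "(a + b) * c = a * c + b * c" by transfer (auto intro!: blinfun_eqI simp: blinfun.bilinear_simps algebra_simps)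
  show "a * (b + c) = a * b + a * c" by transfer (auto intro!: blinfun_eqI simp: blinfun.bilinear_simps algebra_simps)
  show "1 * a = a" by transfer (auto intro!: blinfun_eqI)
  show "a * 1 = a" by transfer (auto intro!: blinfun_eqI)
  show "(0::'a opr) \<noteq> 1" by transfer simp
  show "r *\<^sub>R a * b = r *\<^sub>R (a * b)" by transfer (auto intro!: blinfun_eqI simp: blinfun.bilinear_simps)
  show "a * r *\<^sub>R b = r *\<^sub>R (a * b)" by transfer (auto intro!: blinfun_eqI simp: blinfun.bilinear_simps)
  show "norm (1::'a opr) = 1" by transfer (simp add: norm_blinfun_id_le)
  show "norm (a * b) \<le> norm a * norm b"
  proof transfer
    fix p q :: "('a \<Rightarrow>\<^sub>L 'a) \<times> real"
    have 1: "norm (fst p o\<^sub>L fst q) \<le> max (norm (fst p)) \<bar>snd p\<bar> * max (norm (fst q)) \<bar>snd q\<bar>"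
      by (rule order_trans[OF norm_blinfun_compose mult_mono]) auto
    have 2: "\<bar>snd p * snd q\<bar> \<le> max (norm (fst p)) \<bar>snd p\<bar> * max (norm (fst q)) \<bar>snd q\<bar>"
      unfolding abs_mult by (rule mult_mono) auto
    show "max (norm (fst (fst p o\<^sub>L fst q, snd p * snd q))) \<bar>snd (fst p o\<^sub>L fst q, snd p * snd q)\<bar>
       \<le> max (norm (fst p)) \<bar>snd p\<bar> * max (norm (fst q)) \<bar>snd q\<bar>"
      using 1 2 by simp
  qed
  show "dist a b = norm (a - b)" by (simp add: dist_opr_def)
  show "sgn a = inverse (norm a) *\<^sub>R a" by (simp add: sgn_opr_def)
  show "(norm a = 0) = (a = 0)" by transfer (auto simp: prod_eq_iff max_def)
  show "norm (a + b) \<le> norm a + norm b"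
    apply transfer
    subgoal for p q using norm_triangle_ineq[of "fst p" "fst q"] by (auto simp: max_def abs_if)
    done
  show "norm (r *\<^sub>R a) = \<bar>r\<bar> * norm a" by transfer (simp add: abs_mult max_mult_distrib_left)
  show "(uniformity :: ('a opr \<times> 'a opr) filter) = (INF e\<in>{0 <..}. principal {(x, y). dist x y < e})"
    by (simp add: uniformity_opr_def)
  fix U :: "'a opr set"
  show "open U = (\<forall>x\<in>U. \<forall>\<^sub>F (x', y) in uniformity. x' = x \<longrightarrow> y \<in> U)"
    by (simp add: open_opr_def)
qed
end


lemma norm_fst_rep: "norm (fst (rep a)) \<le> norm a"
  by transfer simp
lemma norm_snd_rep: "\<bar>snd (rep a)\<bar> \<le> norm a"
  by transfer simp
lemma rep_minus: "rep (a - b) = (fst (rep a) - fst (rep b), snd (rep a) - snd (rep b))"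
  by transfer simp

instance opr :: (banach) banach
proof
  fix X :: "nat \<Rightarrow> 'a opr"
  assume C: "Cauchy X"
  have "Cauchy (\<lambda>n. fst (rep (X n)))"
  proof (rule metric_CauchyI)
    fix e :: real assume "0 < e"
    from metric_CauchyD[OF C this] obtain M where M: "\<And>m n. m \<ge> M \<Longrightarrow> n \<ge> M \<Longrightarrow> dist (X m) (X n) < e" by blast
    show "\<exists>M. \<forall>m\<ge>M. \<forall>n\<ge>M. dist (fst (rep (X m))) (fst (rep (X n))) < e"
    proof (intro exI[of _ M] allI impI)
      fix m n assume "m \<ge> M" "n \<ge> M"
      then show "dist (fst (rep (X m))) (fst (rep (X n))) < e"
        using M[of m n] norm_fst_rep[of "X m - X n"] by (simp add: dist_norm rep_minus)
    qed
  qed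
  then obtain L1 where L1: "(\<lambda>n. fst (rep (X n))) \<longlonglongrightarrow> L1" using Cauchy_convergent_iff convergent_def by blast
  have "Cauchy (\<lambda>n. snd (rep (X n)))"
  proof (rule metric_CauchyI)
    fix e :: real assume "0 < e"
    from metric_CauchyD[OF C this] obtain M where M: "\<And>m n. m \<ge> M \<Longrightarrow> n \<ge> M \<Longrightarrow> dist (X m) (X n) < e" by blast
    show "\<exists>M. \<forall>m\<ge>M. \<forall>n\<ge>M. dist (snd (rep (X m))) (snd (rep (X n))) < e"
    proof (intro exI[of _ M] allI impI)
      fix m n assume "m \<ge> M" "n \<ge> M"
      then show "dist (snd (rep (X m))) (snd (rep (X n))) < e"
        using M[of m n] norm_snd_rep[of "X m - X n"] by (simp add: dist_real_def dist_norm rep_minus)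
    qed
  qed
  then obtain L2 where L2: "(\<lambda>n. snd (rep (X n))) \<longlonglongrightarrow> L2" using Cauchy_convergent_iff convergent_def by blast
  have eq: "norm (X n - absr (L1, L2)) = max (norm (fst (rep (X n)) - L1)) \<bar>snd (rep (X n)) - L2\<bar>" for n
    by (simp add: norm_opr.rep_eq rep_minus absr_inverse)
  have "(\<lambda>n. max (norm (fst (rep (X n)) - L1)) \<bar>snd (rep (X n)) - L2\<bar>) \<longlonglongrightarrow> max (norm (L1 - L1)) \<bar>L2 - L2\<bar>"
    by (intro tendsto_intros L1 L2)
  then have "(\<lambda>n. norm (X n - absr (L1, L2))) \<longlonglongrightarrow> 0" unfolding eq by simp
  then have "X \<longlonglongrightarrow> absr (L1, L2)" by (simp add: tendsto_norm_zero_iff LIM_zero_cancel)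
  then show "convergent X" by (auto simp: convergent_def)
qed

definition emb :: "('a::banach \<Rightarrow>\<^sub>L 'a) \<Rightarrow> 'a opr" where "emb X = absr (X, 0)"
definition pr :: "'a opr \<Rightarrow> ('a::banach \<Rightarrow>\<^sub>L 'a)" where "pr Y = fst (rep Y)"

lemma pr_mult: "pr (Y * Z) = pr Y o\<^sub>L pr Z"
  unfolding pr_def by transfer simp
lemma pr_one: "pr 1 = id_blinfun"
  unfolding pr_def by transfer simp
lemma pr_emb[simp]: "pr (emb X) = X"
  unfolding pr_def emb_def by (simp add: absr_inverse)
lemma bounded_linear_pr: "bounded_linear pr"
proof
  show "pr (b1 + b2) = pr b1 + pr b2" for b1 b2 :: "'a opr" unfolding pr_def by transfer simp
  show "pr (r *\<^sub>R b) = r *\<^sub>R pr b" for r and b :: "'a opr" unfolding pr_def by transfer simp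
  show "\<exists>K. \<forall>x. norm (pr x) \<le> norm x * K" by (rule exI[of _ 1]) (simp add: pr_def norm_fst_rep)
qed
lemma bounded_linear_emb: "bounded_linear emb"
proof
  show "emb (b1 + b2) = emb b1 + emb b2" for b1 b2 :: "'a \<Rightarrow>\<^sub>L 'a" unfolding emb_def by transfer simp
  show "emb (r *\<^sub>R b) = r *\<^sub>R emb b" for r and b :: "'a \<Rightarrow>\<^sub>L 'a" unfolding emb_def by transfer simp
  show "\<exists>K. \<forall>x. norm (emb x) \<le> norm x * K" by (rule exI[of _ 1]) (simp add: emb_def norm_opr.rep_eq absr_inverse)
qed
lemma emb_mult: "emb (X o\<^sub>L Y) = emb X * emb Y"
  unfolding emb_def by transfer simp
lemma emb_pow: "emb X ^ n = absr (op_pow X n, 0 ^ n)"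
  by (induction n) (simp_all add: emb_def one_opr_def times_opr.abs_eq)

lemma op_exp_pr: "op_exp X = pr (exp (emb X))"
proof -
  have "summable (\<lambda>n. emb X ^ n /\<^sub>R fact n)" by (rule summable_exp_generic)
  then have "pr (exp (emb X)) = (\<Sum>n. pr (emb X ^ n /\<^sub>R fact n))"
    unfolding exp_def by (simp add: bounded_linear.suminf[OF bounded_linear_pr])
  also have "\<dots> = op_exp X"
    unfolding op_exp_def emb_pow
    by (simp add: linear_simps(5)[OF bounded_linear_pr] pr_def absr_inverse scaleR_opr.rep_eq divide_inverse_commute)
  finally show ?thesis by simp
qed


lemma norm_mult3_le:
  fixes x y z :: "'b::real_normed_algebra"
  assumes "norm x \<le> A" "norm y \<le> B" "norm z \<le> C"
  shows "norm (x * y * z) \<le> A * B * C"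
proof -
  have "norm (x * y * z) \<le> norm x * norm y * norm z"
    by (metis mult_right_mono norm_ge_zero norm_mult_ineq order_trans)
  also have "\<dots> \<le> A * B * C"
    using assms by (intro mult_mono) (auto intro: order_trans[OF norm_ge_zero] mult_nonneg_nonneg)
  finally show ?thesis .
qed

lemma exp_commute:
  fixes x y :: "'b::{real_normed_algebra_1,banach}"
  assumes "x * y = y * x"
  shows "exp x * y = y * exp x"
proof -
  have s: "summable (\<lambda>n. x ^ n /\<^sub>R fact n)" by (rule summable_exp_generic)
  have "exp x * y = (\<Sum>n. x ^ n /\<^sub>R fact n * y)"
    unfolding exp_def by (rule suminf_mult2[OF s])
  also have "\<dots> = (\<Sum>n. y * (x ^ n /\<^sub>R fact n))"
  proof -
    have "x ^ n * y = y * x ^ n" for n by (rule power_commuting_commutes[OF assms])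
    then have "x ^ n /\<^sub>R fact n * y = y * (x ^ n /\<^sub>R fact n)" for n
      by simp
    then show ?thesis by (intro arg_cong[where f=suminf] ext)
  qed
  also have "\<dots> = y * exp x"
    unfolding exp_def by (rule suminf_mult[OF s])
  finally show ?thesis .
qed

lemma cont_exp_scaleR: "continuous_on X (\<lambda>t. exp (t *\<^sub>R A))"
  by (rule continuous_on_vector_derivative[OF exp_scaleR_has_vector_derivative_right])

lemma cont_exp_comp[continuous_intros]:
  "continuous_on X f \<Longrightarrow> continuous_on X (\<lambda>t. exp (f t *\<^sub>R (A::'b::{real_normed_algebra_1,banach})))"
  using continuous_on_compose2[OF cont_exp_scaleR[of UNIV A], of X f] by auto

lemma bounded_on_interval:
  fixes f :: "real \<Rightarrow> 'b::real_normed_vector"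
  assumes "continuous_on {a..b} f"
  shows "\<exists>M>0. \<forall>t\<in>{a..b}. norm (f t) \<le> M"
proof -
  have "compact (f ` {a..b})" by (intro compact_continuous_image assms compact_Icc)
  then have "bounded (f ` {a..b})" by (rule compact_imp_bounded)
  then show ?thesis unfolding bounded_pos by (meson image_eqI)
qed

locale avg =
  fixes a b anat :: "'b::{real_normed_algebra_1,banach}"
  assumes contr: "\<And>t. norm (exp (t *\<^sub>R b)) \<le> 1"
    and lim: "((\<lambda>t. (1 / t) *\<^sub>R integral {0..t} (\<lambda>u. exp (- u *\<^sub>R b) * a * exp (u *\<^sub>R b))) \<longlongrightarrow> anat) at_top"
begin

definition ga :: "real \<Rightarrow> 'b" where "ga u = exp (- u *\<^sub>R b) * a * exp (u *\<^sub>R b)"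
definition S :: "real \<Rightarrow> 'b" where "S s = integral {0..s} ga"

lemma G_add: "exp ((s + t) *\<^sub>R b) = exp (s *\<^sub>R b) * exp (t *\<^sub>R b)"
  by (simp add: scaleR_add_left exp_add_commuting)

lemma G_inv1: "exp (- u *\<^sub>R b) * exp (u *\<^sub>R b) = 1"
  using G_add[of "-u" u] by simp
lemma G_inv2: "exp (u *\<^sub>R b) * exp (- u *\<^sub>R b) = 1"
  using G_add[of u "-u"] by simp

lemma ga_cont: "continuous_on X ga"
  unfolding ga_def by (intro continuous_intros)

lemma norm_ga: "norm (ga u) \<le> norm a"
proof -
  have "norm (exp (- u *\<^sub>R b) * a * exp (u *\<^sub>R b)) \<le> 1 * norm a * 1"
    by (rule norm_mult3_le[OF contr order_refl contr])
  then show ?thesis by (simp add: ga_def)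
qed

lemma S_deriv: "x \<in> {0..L} \<Longrightarrow> (S has_vector_derivative ga x) (at x within {0..L})"
  unfolding S_def by (rule integral_has_vector_derivative[OF ga_cont])

lemma S_integral: "(ga has_integral S s) {0..s}"
  unfolding S_def by (rule integrable_integral[OF integrable_continuous_real[OF ga_cont]])

lemma S_bound: "0 \<le> s \<Longrightarrow> norm (S s) \<le> s * norm a"
  using has_integral_bound[of "norm a" ga "S s" 0 s] S_integral[of s] norm_ga by (auto simp: mult.commute)

lemma S0: "S 0 = 0" unfolding S_def by simp

definition K :: "real \<Rightarrow> real \<Rightarrow> 'b" where "K \<epsilon> t = \<epsilon> *\<^sub>R S (t / \<epsilon>) - t *\<^sub>R anat"

lemma K0: "K \<epsilon> 0 = 0" unfolding K_def by (simp add: S0)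

lemma K_deriv:
  assumes "\<epsilon> > 0" "t \<in> {0..\<tau>}"
  shows "(K \<epsilon> has_vector_derivative (ga (t / \<epsilon>) - anat)) (at t within {0..\<tau>})"
proof -
  have f: "((\<lambda>t. t / \<epsilon>) has_vector_derivative (1 / \<epsilon>)) (at t within {0..\<tau>})"
  proof -
    have "((\<lambda>t. t / \<epsilon>) has_real_derivative (1 / \<epsilon>)) (at t within {0..\<tau>})"
      using assms by (auto intro!: derivative_eq_intros)
    then show ?thesis using assms by (simp add: has_real_derivative_iff_has_vector_derivative)
  qed
  have sub: "(\<lambda>t. t / \<epsilon>) ` {0..\<tau>} \<subseteq> {0..\<tau> / \<epsilon>}"
    using assms by (auto intro: divide_right_mono)
  have "(S has_vector_derivative ga (t / \<epsilon>)) (at (t / \<epsilon>) within (\<lambda>t. t / \<epsilon>) ` {0..\<tau>})"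
    by (rule has_vector_derivative_within_subset[OF S_deriv sub]) (use assms in \<open>auto intro: divide_right_mono\<close>)
  from vector_diff_chain_within[OF f this]
  have "((\<lambda>t. S (t / \<epsilon>)) has_vector_derivative (1 / \<epsilon>) *\<^sub>R ga (t / \<epsilon>)) (at t within {0..\<tau>})"
    by (simp add: o_def)
  then have "((\<lambda>t. \<epsilon> *\<^sub>R S (t / \<epsilon>) - t *\<^sub>R anat) has_vector_derivative
      \<epsilon> *\<^sub>R ((1 / \<epsilon>) *\<^sub>R ga (t / \<epsilon>)) - 1 *\<^sub>R anat) (at t within {0..\<tau>})"
    by (intro derivative_eq_intros) auto
  then show ?thesis using assms unfolding K_def by (simp add: fun_eq_iff)
qed

lemma ga_fun: "ga = (\<lambda>u. exp (- u *\<^sub>R b) * a * exp (u *\<^sub>R b))"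
  by (simp add: fun_eq_iff ga_def)

lemma lim': "((\<lambda>s. (1 / s) *\<^sub>R S s) \<longlongrightarrow> anat) at_top"
  using lim unfolding S_def ga_fun .

lemma K_small:
  assumes tau: "\<tau> > 0" and dl: "\<delta> > 0"
  shows "\<forall>\<^sub>F \<epsilon> in at_right 0. \<forall>t\<in>{0..\<tau>}. norm (K \<epsilon> t) \<le> \<delta>"
proof -
  have "\<forall>\<^sub>F s in at_top. dist ((1 / s) *\<^sub>R S s) anat < \<delta> / \<tau>"
    using tendstoD[OF lim'] tau dl by simp
  then obtain N where N: "\<And>s. s \<ge> N \<Longrightarrow> dist ((1 / s) *\<^sub>R S s) anat < \<delta> / \<tau>"
    unfolding eventually_at_top_linorder by blast
  define S1 where "S1 = max N 1"
  define C where "C = norm a + norm anat"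
  have S1: "S1 \<ge> 1" "S1 \<ge> N" by (auto simp: S1_def)
  have C: "C \<ge> 0" by (simp add: C_def)
  have bpos: "\<delta> / (S1 * (C + 1)) > 0" using S1 C dl by simp
  show ?thesis
    unfolding eventually_at_right_field
  proof (intro exI[of _ "\<delta> / (S1 * (C + 1))"] conjI allI impI ballI)
    show "0 < \<delta> / (S1 * (C + 1))" by (fact bpos)
    fix \<epsilon> t :: real
    assume e0: "0 < \<epsilon>" and eb: "\<epsilon> < \<delta> / (S1 * (C + 1))" and t: "t \<in> {0..\<tau>}"
    show "norm (K \<epsilon> t) \<le> \<delta>"
    proof (cases "t / \<epsilon> \<ge> S1")
      case True
      define s where "s = t / \<epsilon>"
      have s1: "s \<ge> 1" "s \<ge> N" using True S1 by (auto simp: s_def)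
      have ts: "t = \<epsilon> * s" using e0 by (simp add: s_def)
      have "K \<epsilon> t = (\<epsilon> * s) *\<^sub>R ((1 / s) *\<^sub>R S s - anat)"
        unfolding K_def using s1 ts e0 by (simp add: s_def[symmetric] scaleR_diff_right)
      then have "norm (K \<epsilon> t) = t * dist ((1 / s) *\<^sub>R S s) anat"
        using ts e0 s1 by (simp add: dist_norm)
      also have "\<dots> \<le> t * (\<delta> / \<tau>)"
        using N[OF s1(2)] t by (intro mult_left_mono) auto
      also have "\<dots> \<le> \<tau> * (\<delta> / \<tau>)"
        using t dl tau by (intro mult_right_mono) auto
      also have "\<dots> = \<delta>" using tau by simp
      finally show ?thesis .
    next
      case False
      then have tl: "t < \<epsilon> * S1" using e0 by (simp add: field_simps)
      have t0: "t \<ge> 0" using t by simp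
      have "norm (K \<epsilon> t) \<le> norm (\<epsilon> *\<^sub>R S (t / \<epsilon>)) + norm (t *\<^sub>R anat)"
        unfolding K_def by (rule norm_triangle_ineq4)
      also have "norm (\<epsilon> *\<^sub>R S (t / \<epsilon>)) \<le> \<epsilon> * ((t / \<epsilon>) * norm a)"
        using mult_left_mono[OF S_bound[of "t / \<epsilon>"], of \<epsilon>] e0 t0 by simp
      also have "\<epsilon> * ((t / \<epsilon>) * norm a) = t * norm a" using e0 by simp
      also have "norm (t *\<^sub>R anat) = t * norm anat" using t0 by simp
      also have "t * norm a + t * norm anat = t * C" by (simp add: C_def algebra_simps)
      also have "\<dots> \<le> (\<epsilon> * S1) * (C + 1)"
        using tl t0 C by (intro mult_mono) auto
      also have "\<dots> = \<epsilon> * (S1 * (C + 1))" by simp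
      also have "\<dots> \<le> \<delta>"
      proof -
        have pos: "S1 * (C + 1) > 0" using S1 C by simp
        show ?thesis using eb unfolding pos_less_divide_eq[OF pos] by (simp only: less_imp_le)
      qed
      finally show ?thesis by simp
    qed
  qed
qed

lemma S_shift:
  assumes v: "0 \<le> v" and t: "0 \<le> t"
  shows "exp (- v *\<^sub>R b) * S t * exp (v *\<^sub>R b) = S (t + v) - S v"
proof -
  have h1: "((\<lambda>u. exp (- v *\<^sub>R b) * ga u * exp (v *\<^sub>R b)) has_integral
      exp (- v *\<^sub>R b) * S t * exp (v *\<^sub>R b)) {0..t}"
    by (intro has_integral_mult_left has_integral_mult_right S_integral)
  have eq: "exp (- v *\<^sub>R b) * ga u * exp (v *\<^sub>R b) = ga (u + v)" for u
  proof -
    have e1: "exp (- (u + v) *\<^sub>R b) = exp (- v *\<^sub>R b) * exp (- u *\<^sub>R b)"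
      using G_add[of "-v" "-u"] by (simp add: add.commute)
    have e2: "exp ((u + v) *\<^sub>R b) = exp (u *\<^sub>R b) * exp (v *\<^sub>R b)"
      using G_add[of u v] by simp
    show ?thesis unfolding ga_def e1 e2 by (simp add: mult.assoc)
  qed
  have der: "((\<lambda>u. S (u + v)) has_vector_derivative ga (u + v)) (at u within {0..t})"
    if u: "u \<in> {0..t}" for u
  proof -
    have f: "((\<lambda>u. u + v) has_vector_derivative 1) (at u within {0..t})"
      by (auto intro!: derivative_eq_intros)
    have sub: "(\<lambda>u. u + v) ` {0..t} \<subseteq> {0..t + v}" using v by auto
    have "(S has_vector_derivative ga (u + v)) (at (u + v) within (\<lambda>u. u + v) ` {0..t})"
      by (rule has_vector_derivative_within_subset[OF S_deriv sub]) (use u v in auto)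
    from vector_diff_chain_within[OF f this] show ?thesis by (simp add: o_def)
  qed
  have h2: "((\<lambda>u. ga (u + v)) has_integral (S (t + v) - S (0 + v))) {0..t}"
    by (rule fundamental_theorem_of_calculus[OF t der])
  show ?thesis using has_integral_unique[OF h1[unfolded eq] h2] by simp
qed

lemma anat_conj:
  assumes v: "0 \<le> v"
  shows "exp (- v *\<^sub>R b) * anat * exp (v *\<^sub>R b) = anat"
proof -
  let ?L = "\<lambda>t. exp (- v *\<^sub>R b) * ((1 / t) *\<^sub>R S t) * exp (v *\<^sub>R b)"
  have l1: "(?L \<longlongrightarrow> exp (- v *\<^sub>R b) * anat * exp (v *\<^sub>R b)) at_top"
    by (intro tendsto_mult tendsto_const lim')
  have inv0: "((\<lambda>t::real. 1 / t) \<longlongrightarrow> 0) at_top"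
    by (rule tendsto_divide_0[OF tendsto_const filterlim_at_top_imp_at_infinity[OF filterlim_ident]])
  have fl: "filterlim (\<lambda>t. t + v) at_top at_top"
    using filterlim_tendsto_add_at_top[OF tendsto_const filterlim_ident, of v] by (simp add: add.commute)
  have l2: "((\<lambda>t. (1 / (t + v)) *\<^sub>R S (t + v)) \<longlongrightarrow> anat) at_top"
    using filterlim_compose[OF lim' fl] by simp
  have l3: "((\<lambda>t. (1 + v * (1 / t)) *\<^sub>R ((1 / (t + v)) *\<^sub>R S (t + v)) - (1 / t) *\<^sub>R S v)
      \<longlongrightarrow> (1 + v * 0) *\<^sub>R anat - 0 *\<^sub>R S v) at_top"
    by (intro tendsto_intros l2 inv0)
  have ev: "\<forall>\<^sub>F t in at_top. (1 + v * (1 / t)) *\<^sub>R ((1 / (t + v)) *\<^sub>R S (t + v)) - (1 / t) *\<^sub>R S v = ?L t"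
    using eventually_gt_at_top[of 0]
  proof eventually_elim
    case (elim t)
    have "?L t = (1 / t) *\<^sub>R (exp (- v *\<^sub>R b) * S t * exp (v *\<^sub>R b))" by simp
    also have "\<dots> = (1 / t) *\<^sub>R (S (t + v) - S v)" using S_shift[OF v] elim by simp
    also have "\<dots> = (1 + v * (1 / t)) *\<^sub>R ((1 / (t + v)) *\<^sub>R S (t + v)) - (1 / t) *\<^sub>R S v"
    proof -
      have "(1 + v * (1 / t)) * (1 / (t + v)) = 1 / t" using elim v by (simp add: field_simps)
      then show ?thesis by (simp add: scaleR_diff_right)
    qed
    finally show ?case by simp
  qed
  have "(?L \<longlongrightarrow> anat) at_top"
    using Lim_transform_eventually[OF l3 ev] by simp
  from tendsto_unique[OF trivial_limit_at_top_linorder l1 this] show ?thesis .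
qed

lemma anat_comm: "0 \<le> v \<Longrightarrow> anat * exp (v *\<^sub>R b) = exp (v *\<^sub>R b) * anat"
  using anat_conj[of v] G_inv2[of v]
  by (metis mult.assoc mult_1_left)

lemma part1:
  fixes d e :: "real \<Rightarrow> 'b"
  assumes d: "d C1_differentiable_on UNIV" and e: "e C1_differentiable_on UNIV" and tau: "\<tau> > 0"
  shows "((\<lambda>\<epsilon>. integral {0..\<tau>} (\<lambda>t. d t * exp (- (t / \<epsilon>) *\<^sub>R b) * a * exp ((t / \<epsilon>) *\<^sub>R b) * e t))
          \<longlongrightarrow> integral {0..\<tau>} (\<lambda>t. d t * anat * e t)) (at_right 0)"
proof -
  obtain d' where dd: "\<And>x. (d has_vector_derivative d' x) (at x)" and cd': "continuous_on UNIV d'"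
    using d unfolding C1_differentiable_on_def by auto
  obtain e' where ed: "\<And>x. (e has_vector_derivative e' x) (at x)" and ce': "continuous_on UNIV e'"
    using e unfolding C1_differentiable_on_def by auto
  have cd: "continuous_on X d" for X
    by (rule continuous_on_vector_derivative) (rule has_vector_derivative_at_within[OF dd])
  have ce: "continuous_on X e" for X
    by (rule continuous_on_vector_derivative) (rule has_vector_derivative_at_within[OF ed])
  have "continuous_on {0..\<tau>} (\<lambda>t. norm (d t) + norm (d' t) + norm (e t) + norm (e' t))"
    using cd ce continuous_on_subset[OF cd' subset_UNIV] continuous_on_subset[OF ce' subset_UNIV]
    by (intro continuous_on_add continuous_on_norm) auto
  from bounded_on_interval[OF this] obtain M where M0: "M > 0"
    and M: "\<And>t. t \<in> {0..\<tau>} \<Longrightarrow> norm (norm (d t) + norm (d' t) + norm (e t) + norm (e' t)) \<le> M"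
    by blast
  have Md: "norm (d t) \<le> M" "norm (d' t) \<le> M" "norm (e t) \<le> M" "norm (e' t) \<le> M"
    if "t \<in> {0..\<tau>}" for t
  proof -
    have h: "norm (d t) + norm (d' t) + norm (e t) + norm (e' t) \<le> M"
      using M[OF that] by (simp add: abs_of_nonneg)
    have "0 \<le> norm (d t)" "0 \<le> norm (d' t)" "0 \<le> norm (e t)" "0 \<le> norm (e' t)" by simp_all
    with h show "norm (d t) \<le> M" "norm (d' t) \<le> M" "norm (e t) \<le> M" "norm (e' t) \<le> M"
      by linarith+
  qed
  show ?thesis
  proof (rule tendstoI)
    fix \<eta> :: real assume eta: "\<eta> > 0"
    define \<delta> where "\<delta> = \<eta> / (M * M * (1 + 2 * \<tau>) * 2)"
    have dpos: "\<delta> > 0" using eta M0 tau by (simp add: \<delta>_def)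
    have key: "M * M * \<delta> * (1 + 2 * \<tau>) < \<eta>"
    proof -
      have P: "M * M * (1 + 2 * \<tau>) > 0" using M0 tau by simp
      define Q where "Q = M * M * (1 + 2 * \<tau>)"
      have "M * M * \<delta> * (1 + 2 * \<tau>) = Q * (\<eta> / (Q * 2))"
        unfolding \<delta>_def Q_def by (simp only: mult.commute mult.left_commute)
      also have "\<dots> = \<eta> / 2" using P unfolding Q_def[symmetric] by simp
      finally have "M * M * \<delta> * (1 + 2 * \<tau>) = \<eta> / 2" .
      then show ?thesis using eta by simp
    qed
    show "\<forall>\<^sub>F \<epsilon> in at_right 0. dist (integral {0..\<tau>} (\<lambda>t. d t * exp (- (t / \<epsilon>) *\<^sub>R b) * a * exp ((t / \<epsilon>) *\<^sub>R b) * e t))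
          (integral {0..\<tau>} (\<lambda>t. d t * anat * e t)) < \<eta>"
      using eventually_conj[OF eventually_at_right_less[of 0] K_small[OF tau dpos]]
    proof eventually_elim
      case (elim \<epsilon>)
      then have e0: "\<epsilon> > 0" and Kb: "\<And>t. t \<in> {0..\<tau>} \<Longrightarrow> norm (K \<epsilon> t) \<le> \<delta>" by auto
      define f1 where "f1 = (\<lambda>t. d t * ga (t / \<epsilon>) * e t)"
      define f2 where "f2 = (\<lambda>t. d t * anat * e t)"
      have f1eq: "(\<lambda>t. d t * exp (- (t / \<epsilon>) *\<^sub>R b) * a * exp ((t / \<epsilon>) *\<^sub>R b) * e t) = f1"
        by (simp add: f1_def ga_def mult.assoc fun_eq_iff)
      have cga: "continuous_on {0..\<tau>} (\<lambda>t. ga (t / \<epsilon>))"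
      proof -
        have "continuous_on {0..\<tau>} (\<lambda>t. t / \<epsilon>)" using e0
          by (intro continuous_on_divide continuous_on_id continuous_on_const) auto
        then show ?thesis using continuous_on_compose2[OF ga_cont[of UNIV], of "{0..\<tau>}" "\<lambda>t. t / \<epsilon>"] by simp
      qed
      have i1: "(f1 has_integral integral {0..\<tau>} f1) {0..\<tau>}"
      proof -
        have "continuous_on {0..\<tau>} f1" unfolding f1_def by (intro continuous_on_mult cd ce cga)
        then show ?thesis by (intro integrable_integral integrable_continuous_real)
      qed
      have i2: "(f2 has_integral integral {0..\<tau>} f2) {0..\<tau>}"
      proof -
        have "continuous_on {0..\<tau>} f2" unfolding f2_def by (intro continuous_on_mult cd ce continuous_on_const)
        then show ?thesis by (intro integrable_integral integrable_continuous_real)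
      qed
      define Th where "Th = (\<lambda>t. d t * K \<epsilon> t * e t)"
      have der: "(Th has_vector_derivative (d t * K \<epsilon> t * e' t + (d t * (ga (t / \<epsilon>) - anat) + d' t * K \<epsilon> t) * e t))
          (at t within {0..\<tau>})" if t: "t \<in> {0..\<tau>}" for t
        unfolding Th_def
        by (rule has_vector_derivative_mult[OF has_vector_derivative_mult[OF has_vector_derivative_at_within[OF dd] K_deriv[OF e0 t]]
              has_vector_derivative_at_within[OF ed]])
      have ftc: "((\<lambda>t. d t * K \<epsilon> t * e' t + (d t * (ga (t / \<epsilon>) - anat) + d' t * K \<epsilon> t) * e t)
          has_integral (Th \<tau> - Th 0)) {0..\<tau>}"
        using fundamental_theorem_of_calculus[OF _ der] tau by simp
      have Th0: "Th 0 = 0" by (simp add: Th_def K0)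
      have r: "((\<lambda>t. d t * K \<epsilon> t * e' t + d' t * K \<epsilon> t * e t) has_integral
          (Th \<tau> - (integral {0..\<tau>} f1 - integral {0..\<tau>} f2))) {0..\<tau>}"
      proof -
        have "((\<lambda>t. (d t * K \<epsilon> t * e' t + (d t * (ga (t / \<epsilon>) - anat) + d' t * K \<epsilon> t) * e t) - (f1 t - f2 t))
          has_integral (Th \<tau> - Th 0 - (integral {0..\<tau>} f1 - integral {0..\<tau>} f2))) {0..\<tau>}"
          by (intro has_integral_diff ftc i1 i2)
        moreover have "(\<lambda>t. (d t * K \<epsilon> t * e' t + (d t * (ga (t / \<epsilon>) - anat) + d' t * K \<epsilon> t) * e t) - (f1 t - f2 t))
          = (\<lambda>t. d t * K \<epsilon> t * e' t + d' t * K \<epsilon> t * e t)"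
          by (simp add: fun_eq_iff f1_def f2_def distrib_right distrib_left right_diff_distrib left_diff_distrib)
        ultimately show ?thesis using Th0 by simp
      qed
      have rb: "norm (d t * K \<epsilon> t * e' t + d' t * K \<epsilon> t * e t) \<le> 2 * (M * M * \<delta>)"
        if t: "t \<in> {0..\<tau>}" for t
      proof -
        have "norm (d t * K \<epsilon> t * e' t) \<le> M * \<delta> * M"
          by (rule norm_mult3_le[OF Md(1)[OF t] Kb[OF t] Md(4)[OF t]])
        moreover have "norm (d' t * K \<epsilon> t * e t) \<le> M * \<delta> * M"
          by (rule norm_mult3_le[OF Md(2)[OF t] Kb[OF t] Md(3)[OF t]])
        moreover have "M * \<delta> * M = M * M * \<delta>" by (simp only: mult.assoc mult.commute[of \<delta> M])
        ultimately show ?thesis using norm_triangle_ineq[of "d t * K \<epsilon> t * e' t" "d' t * K \<epsilon> t * e t"]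
          by linarith
      qed
      have b1: "norm (Th \<tau> - (integral {0..\<tau>} f1 - integral {0..\<tau>} f2)) \<le> 2 * (M * M * \<delta>) * \<tau>"
      proof -
        have B0: "0 \<le> 2 * (M * M * \<delta>)" using M0 dpos by simp
        show ?thesis
          using has_integral_bound[OF B0 r[unfolded cbox_interval[symmetric]]] rb tau
          by (simp add: cbox_interval)
      qed
      have b2: "norm (Th \<tau>) \<le> M * \<delta> * M"
      proof -
        have t: "\<tau> \<in> {0..\<tau>}" using tau by simp
        show ?thesis unfolding Th_def by (rule norm_mult3_le[OF Md(1)[OF t] Kb[OF t] Md(3)[OF t]])
      qed
      have "norm (integral {0..\<tau>} f1 - integral {0..\<tau>} f2) \<le> norm (Th \<tau>) + norm (Th \<tau> - (integral {0..\<tau>} f1 - integral {0..\<tau>} f2))"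
        using norm_triangle_sub[of "integral {0..\<tau>} f1 - integral {0..\<tau>} f2" "Th \<tau>"]
          norm_minus_commute[of "Th \<tau>" "integral {0..\<tau>} f1 - integral {0..\<tau>} f2"] by simp
      also have "\<dots> \<le> M * M * \<delta> * (1 + 2 * \<tau>)"
      proof -
        have "M * \<delta> * M + 2 * (M * M * \<delta>) * \<tau> = M * M * \<delta> * (1 + 2 * \<tau>)" by (simp add: algebra_simps)
        then show ?thesis using b1 b2 by linarith
      qed
      also have "\<dots> < \<eta>" by (fact key)
      finally show ?case unfolding f1eq dist_norm f2_def[symmetric] .
    qed
  qed
qed

definition U :: "real \<Rightarrow> real \<Rightarrow> 'b" where
  "U \<epsilon> t = exp (- (t / \<epsilon>) *\<^sub>R b) * exp ((t / \<epsilon>) *\<^sub>R (b + \<epsilon> *\<^sub>R a))"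

lemma U_deriv:
  assumes e0: "\<epsilon> > 0"
  shows "(U \<epsilon> has_vector_derivative ga (t / \<epsilon>) * U \<epsilon> t) (at t within X)"
proof -
  define Y1 where "Y1 = (- (1 / \<epsilon>)) *\<^sub>R b"
  define Y2 where "Y2 = (1 / \<epsilon>) *\<^sub>R (b + \<epsilon> *\<^sub>R a)"
  have Ueq: "U \<epsilon> = (\<lambda>t. exp (t *\<^sub>R Y1) * exp (t *\<^sub>R Y2))"
    by (simp add: fun_eq_iff U_def Y1_def Y2_def divide_inverse)
  have d: "((\<lambda>t. exp (t *\<^sub>R Y1) * exp (t *\<^sub>R Y2)) has_vector_derivative
      exp (t *\<^sub>R Y1) * (exp (t *\<^sub>R Y2) * Y2) + (Y1 * exp (t *\<^sub>R Y1)) * exp (t *\<^sub>R Y2)) (at t within X)"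
    by (rule has_vector_derivative_mult[OF has_vector_derivative_at_within[OF exp_scaleR_has_vector_derivative_left]
          exp_scaleR_has_vector_derivative_right])
  have Y12: "Y1 + Y2 = a" using e0 by (simp add: Y1_def Y2_def scaleR_add_right)
  have c1: "Y1 * exp (t *\<^sub>R Y1) = exp (t *\<^sub>R Y1) * Y1" by (simp add: exp_times_scaleR_commute)
  have c2: "exp (t *\<^sub>R Y2) * Y2 = Y2 * exp (t *\<^sub>R Y2)" by (simp add: exp_times_scaleR_commute)
  have "exp (t *\<^sub>R Y1) * (exp (t *\<^sub>R Y2) * Y2) + (Y1 * exp (t *\<^sub>R Y1)) * exp (t *\<^sub>R Y2)
      = exp (t *\<^sub>R Y1) * (Y1 + Y2) * exp (t *\<^sub>R Y2)"
    unfolding c1 c2 by (simp add: distrib_left distrib_right mult.assoc add.commute)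
  also have "\<dots> = exp (t *\<^sub>R Y1) * a * exp (t *\<^sub>R Y2)" by (simp add: Y12)
  also have "\<dots> = ga (t / \<epsilon>) * U \<epsilon> t"
  proof -
    have "ga (t / \<epsilon>) * U \<epsilon> t = exp (- (t / \<epsilon>) *\<^sub>R b) * a * (exp ((t / \<epsilon>) *\<^sub>R b) * exp (- (t / \<epsilon>) *\<^sub>R b))
        * exp ((t / \<epsilon>) *\<^sub>R (b + \<epsilon> *\<^sub>R a))"
      by (simp add: ga_def U_def mult.assoc)
    also have "\<dots> = exp (- (t / \<epsilon>) *\<^sub>R b) * a * exp ((t / \<epsilon>) *\<^sub>R (b + \<epsilon> *\<^sub>R a))"
      by (simp only: G_inv2 mult_1_right)
    also have "\<dots> = exp (t *\<^sub>R Y1) * a * exp (t *\<^sub>R Y2)"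
      by (simp add: Y1_def Y2_def divide_inverse)
    finally show ?thesis by simp
  qed
  finally show ?thesis using d unfolding Ueq by simp
qed

lemma U0: "U \<epsilon> 0 = 1" by (simp add: U_def)

lemma V_deriv:
  "((\<lambda>t. exp ((T - t) *\<^sub>R anat)) has_vector_derivative - (exp ((T - t) *\<^sub>R anat) * anat)) (at t within X)"
proof -
  have f: "((\<lambda>t. T - t) has_vector_derivative -1) (at t within X)"
    by (auto intro!: derivative_eq_intros)
  from vector_diff_chain_within[OF f exp_scaleR_has_vector_derivative_right]
  show ?thesis by (simp add: o_def)
qed

lemma duhamel:
  assumes e0: "\<epsilon> > 0" and T: "T \<in> {0..\<tau>}"
    and Kb: "\<And>t. t \<in> {0..\<tau>} \<Longrightarrow> norm (K \<epsilon> t) \<le> \<delta>"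
    and Mv: "\<And>t. t \<in> {0..\<tau>} \<Longrightarrow> norm (exp (t *\<^sub>R anat)) \<le> Mv"
    and Mu: "\<And>t. t \<in> {0..\<tau>} \<Longrightarrow> norm (U \<epsilon> t) \<le> Mu"
  shows "norm (U \<epsilon> T - exp (T *\<^sub>R anat)) \<le> \<delta> * Mu * (1 + \<tau> * Mv * (norm anat + norm a))"
proof -
  have T0: "0 \<le> T" "T \<le> \<tau>" using T by auto
  have d0: "0 \<le> \<delta>" using Kb[OF T] norm_ge_zero order_trans by blast
  have mv0: "0 \<le> Mv" using Mv[OF T] norm_ge_zero order_trans by blast
  have mu0: "0 \<le> Mu" using Mu[OF T] norm_ge_zero order_trans by blast
  define C where "C = norm anat + norm a"
  have C0: "0 \<le> C" by (simp add: C_def)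
  define V where "V t = exp ((T - t) *\<^sub>R anat)" for t
  define Th where "Th t = V t * (1 - K \<epsilon> t) * U \<epsilon> t" for t
  have der: "(Th has_vector_derivative V t * (anat * K \<epsilon> t - K \<epsilon> t * ga (t / \<epsilon>)) * U \<epsilon> t) (at t within {0..T})"
    if t: "t \<in> {0..T}" for t
  proof -
    have dV: "(V has_vector_derivative - (V t * anat)) (at t within {0..T})"
      unfolding V_def[abs_def] by (rule V_deriv)
    have dK: "((\<lambda>t. 1 - K \<epsilon> t) has_vector_derivative (0 - (ga (t / \<epsilon>) - anat))) (at t within {0..T})"
      by (rule has_vector_derivative_diff[OF has_vector_derivative_const K_deriv[OF e0 t]])
    have "(Th has_vector_derivative
        (V t * (1 - K \<epsilon> t)) * (ga (t / \<epsilon>) * U \<epsilon> t) + (V t * (0 - (ga (t / \<epsilon>) - anat)) + (- (V t * anat)) * (1 - K \<epsilon> t)) * U \<epsilon> t)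
        (at t within {0..T})"
      unfolding Th_def[abs_def]
      by (rule has_vector_derivative_mult[OF has_vector_derivative_mult[OF dV dK] U_deriv[OF e0]])
    moreover have "(V t * (1 - K \<epsilon> t)) * (ga (t / \<epsilon>) * U \<epsilon> t) + (V t * (0 - (ga (t / \<epsilon>) - anat)) + (- (V t * anat)) * (1 - K \<epsilon> t)) * U \<epsilon> t
        = V t * (anat * K \<epsilon> t - K \<epsilon> t * ga (t / \<epsilon>)) * U \<epsilon> t"
      by (simp add: distrib_right distrib_left right_diff_distrib left_diff_distrib mult.assoc)
    ultimately show ?thesis by simp
  qed
  have ftc: "((\<lambda>t. V t * (anat * K \<epsilon> t - K \<epsilon> t * ga (t / \<epsilon>)) * U \<epsilon> t) has_integral (Th T - Th 0)) {0..T}"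
    by (rule fundamental_theorem_of_calculus[OF T0(1) der])
  have ThT: "Th T = U \<epsilon> T - K \<epsilon> T * U \<epsilon> T" by (simp add: Th_def V_def left_diff_distrib)
  have Th0: "Th 0 = exp (T *\<^sub>R anat)" by (simp add: Th_def V_def K0 U0)
  have pb: "norm (V t * (anat * K \<epsilon> t - K \<epsilon> t * ga (t / \<epsilon>)) * U \<epsilon> t) \<le> Mv * (\<delta> * C) * Mu"
    if t: "t \<in> cbox 0 T" for t
  proof -
    have t': "t \<in> {0..\<tau>}" "T - t \<in> {0..\<tau>}" using t T0 by (auto simp: cbox_interval)
    have "norm (anat * K \<epsilon> t - K \<epsilon> t * ga (t / \<epsilon>)) \<le> norm (anat * K \<epsilon> t) + norm (K \<epsilon> t * ga (t / \<epsilon>))"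
      by (rule norm_triangle_ineq4)
    also have "\<dots> \<le> norm anat * norm (K \<epsilon> t) + norm (K \<epsilon> t) * norm (ga (t / \<epsilon>))"
      by (intro add_mono norm_mult_ineq)
    also have "\<dots> \<le> norm anat * \<delta> + \<delta> * norm a"
      using Kb[OF t'(1)] norm_ga[of "t / \<epsilon>"] d0 by (intro add_mono mult_mono) auto
    also have "\<dots> = \<delta> * C" by (simp add: C_def algebra_simps)
    finally have m: "norm (anat * K \<epsilon> t - K \<epsilon> t * ga (t / \<epsilon>)) \<le> \<delta> * C" .
    show ?thesis
      by (rule norm_mult3_le[OF _ m Mu[OF t'(1)]]) (use Mv[OF t'(2)] in \<open>simp add: V_def\<close>)
  qed
  have B0: "0 \<le> Mv * (\<delta> * C) * Mu" using mv0 d0 C0 mu0 by simp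
  have ib: "norm (Th T - Th 0) \<le> Mv * (\<delta> * C) * Mu * T"
    using has_integral_bound[OF B0 ftc[unfolded cbox_interval[symmetric]] pb] T0 by (simp add: cbox_interval)
  have h1: "norm (U \<epsilon> T - exp (T *\<^sub>R anat)) \<le> norm (K \<epsilon> T * U \<epsilon> T) + norm (Th T - Th 0)"
    unfolding ThT Th0 using norm_triangle_ineq[of "K \<epsilon> T * U \<epsilon> T" "U \<epsilon> T - K \<epsilon> T * U \<epsilon> T - exp (T *\<^sub>R anat)"]
    by (simp add: algebra_simps)
  have h2: "norm (K \<epsilon> T * U \<epsilon> T) \<le> \<delta> * Mu"
    using Kb[OF T] Mu[OF T] d0 by (rule order_trans[OF norm_mult_ineq mult_mono]) simp
  have h3: "Mv * (\<delta> * C) * Mu * T \<le> Mv * (\<delta> * C) * Mu * \<tau>"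
    using B0 T0 by (intro mult_left_mono) auto
  have eq: "\<delta> * Mu * (1 + \<tau> * Mv * C) = \<delta> * Mu + Mv * (\<delta> * C) * Mu * \<tau>" by (simp add: algebra_simps)
  show ?thesis using h1 h2 h3 ib eq unfolding C_def[symmetric] by linarith
qed

lemma part2_bound:
  assumes tau: "\<tau> > 0" and eta: "\<eta> > 0"
  shows "\<forall>\<^sub>F \<epsilon> in at_right 0. norm (U \<epsilon> \<tau> - exp (\<tau> *\<^sub>R anat)) < \<eta>"
proof -
  obtain Mv where Mv0: "Mv > 0" and Mv: "\<And>t. t \<in> {0..\<tau>} \<Longrightarrow> norm (exp (t *\<^sub>R anat)) \<le> Mv"
    using bounded_on_interval[OF cont_exp_scaleR[of "{0..\<tau>}" anat]] by blast
  define Q where "Q = 1 + \<tau> * Mv * (norm anat + norm a)"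
  have Q1: "Q \<ge> 1" using tau Mv0 by (simp add: Q_def)
  define \<delta> where "\<delta> = min (1 / (2 * Q)) (\<eta> / (4 * Mv * Q))"
  have dpos: "\<delta> > 0" using Q1 eta Mv0 by (simp add: \<delta>_def)
  have dQ: "\<delta> * Q \<le> 1 / 2"
  proof -
    have "\<delta> * Q \<le> 1 / (2 * Q) * Q" using Q1 by (intro mult_right_mono) (auto simp: \<delta>_def)
    also have "\<dots> = 1 / 2" using Q1 by simp
    finally show ?thesis .
  qed
  have dMQ: "\<delta> * (2 * Mv) * Q \<le> \<eta> / 2"
  proof -
    have "\<delta> * (2 * Mv * Q) \<le> \<eta> / (4 * Mv * Q) * (2 * Mv * Q)" using Q1 Mv0 by (intro mult_right_mono) (auto simp: \<delta>_def)
    also have "\<dots> = \<eta> / 2" using Q1 Mv0 by simp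
    finally show ?thesis by (simp add: mult.assoc)
  qed
  show ?thesis
    using eventually_conj[OF eventually_at_right_less[of 0] K_small[OF tau dpos]]
  proof eventually_elim
    case (elim \<epsilon>)
    then have e0: "\<epsilon> > 0" and Kb: "\<And>t. t \<in> {0..\<tau>} \<Longrightarrow> norm (K \<epsilon> t) \<le> \<delta>" by auto
    have "continuous_on {0..\<tau>} (\<lambda>t. norm (U \<epsilon> t))"
      by (intro continuous_on_norm continuous_on_vector_derivative) (rule U_deriv[OF e0])
    then obtain T0 where T0: "T0 \<in> {0..\<tau>}" and T0m: "\<And>t. t \<in> {0..\<tau>} \<Longrightarrow> norm (U \<epsilon> t) \<le> norm (U \<epsilon> T0)"
      using continuous_attains_sup[of "{0..\<tau>}" "\<lambda>t. norm (U \<epsilon> t)"] tau by auto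
    define Mu where "Mu = norm (U \<epsilon> T0)"
    have mu0: "Mu \<ge> 0" by (simp add: Mu_def)
    have D: "norm (U \<epsilon> T - exp (T *\<^sub>R anat)) \<le> \<delta> * Mu * Q" if "T \<in> {0..\<tau>}" for T
      unfolding Q_def by (rule duhamel[OF e0 that Kb Mv]) (use T0m in \<open>auto simp: Mu_def\<close>)
    have "Mu \<le> norm (exp (T0 *\<^sub>R anat)) + norm (U \<epsilon> T0 - exp (T0 *\<^sub>R anat))"
      unfolding Mu_def by (rule norm_triangle_sub)
    moreover have "\<delta> * Mu * Q \<le> Mu * (1 / 2)"
      using mult_left_mono[OF dQ mu0] by (simp add: algebra_simps)
    ultimately have "Mu \<le> Mv + Mu * (1 / 2)" using D[OF T0] Mv[OF T0] by linarith
    then have Mu2: "Mu \<le> 2 * Mv" by simp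
    have "norm (U \<epsilon> \<tau> - exp (\<tau> *\<^sub>R anat)) \<le> \<delta> * Mu * Q" using D tau by simp
    also have "\<dots> \<le> \<delta> * (2 * Mv) * Q"
      using Mu2 dpos Q1 mu0 by (intro mult_right_mono mult_left_mono) auto
    also have "\<dots> < \<eta>" using dMQ eta by simp
    finally show ?case .
  qed
qed

lemma part2a:
  assumes tau: "\<tau> > 0"
  shows "((\<lambda>\<epsilon>. exp (- (\<tau> / \<epsilon>) *\<^sub>R b) * exp ((\<tau> / \<epsilon>) *\<^sub>R (b + \<epsilon> *\<^sub>R a))) \<longlongrightarrow> exp (\<tau> *\<^sub>R anat)) (at_right 0)"
proof (rule tendstoI)
  fix \<eta> :: real assume "\<eta> > 0"
  from part2_bound[OF tau this]
  show "\<forall>\<^sub>F \<epsilon> in at_right 0. dist (exp (- (\<tau> / \<epsilon>) *\<^sub>R b) * exp ((\<tau> / \<epsilon>) *\<^sub>R (b + \<epsilon> *\<^sub>R a))) (exp (\<tau> *\<^sub>R anat)) < \<eta>"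
    by (simp add: U_def dist_norm)
qed

lemma part2b:
  assumes tau: "\<tau> > 0"
  shows "((\<lambda>\<epsilon>. exp ((\<tau> / \<epsilon>) *\<^sub>R (b + \<epsilon> *\<^sub>R a)) * exp (- (\<tau> / \<epsilon>) *\<^sub>R b)) \<longlongrightarrow> exp (\<tau> *\<^sub>R anat)) (at_right 0)"
proof (rule tendstoI)
  fix \<eta> :: real assume "\<eta> > 0"
  show "\<forall>\<^sub>F \<epsilon> in at_right 0. dist (exp ((\<tau> / \<epsilon>) *\<^sub>R (b + \<epsilon> *\<^sub>R a)) * exp (- (\<tau> / \<epsilon>) *\<^sub>R b)) (exp (\<tau> *\<^sub>R anat)) < \<eta>"
    using eventually_conj[OF eventually_at_right_less[of 0] part2_bound[OF tau \<open>\<eta> > 0\<close>]]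
  proof eventually_elim
    case (elim \<epsilon>)
    define s where "s = \<tau> / \<epsilon>"
    have s0: "s \<ge> 0" using elim tau by (simp add: s_def)
    define E2 where "E2 = exp ((\<tau> / \<epsilon>) *\<^sub>R (b + \<epsilon> *\<^sub>R a))"
    define V where "V = exp (\<tau> *\<^sub>R anat)"
    have c: "(\<tau> *\<^sub>R anat) * exp (s *\<^sub>R b) = exp (s *\<^sub>R b) * (\<tau> *\<^sub>R anat)"
      using anat_comm[OF s0] by simp
    have cV: "V * exp (s *\<^sub>R b) = exp (s *\<^sub>R b) * V"
      unfolding V_def by (rule exp_commute[OF c])
    have Ut: "U \<epsilon> \<tau> = exp (- s *\<^sub>R b) * E2" by (simp add: U_def s_def E2_def)
    have "exp (s *\<^sub>R b) * (U \<epsilon> \<tau> - V) * exp (- s *\<^sub>R b)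
        = (exp (s *\<^sub>R b) * exp (- s *\<^sub>R b)) * E2 * exp (- s *\<^sub>R b) - (exp (s *\<^sub>R b) * V) * exp (- s *\<^sub>R b)"
      unfolding Ut by (simp add: right_diff_distrib left_diff_distrib mult.assoc)
    also have "\<dots> = E2 * exp (- s *\<^sub>R b) - V * (exp (s *\<^sub>R b) * exp (- s *\<^sub>R b))"
      unfolding cV[symmetric] by (simp only: G_inv2 mult_1_left mult.assoc)
    also have "\<dots> = E2 * exp (- s *\<^sub>R b) - V" by (simp only: G_inv2 mult_1_right)
    finally have eq: "E2 * exp (- s *\<^sub>R b) - V = exp (s *\<^sub>R b) * (U \<epsilon> \<tau> - V) * exp (- s *\<^sub>R b)" by simp
    have "norm (E2 * exp (- s *\<^sub>R b) - V) \<le> 1 * norm (U \<epsilon> \<tau> - V) * 1"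
      unfolding eq by (rule norm_mult3_le[OF contr order_refl contr])
    then have "norm (E2 * exp (- s *\<^sub>R b) - V) < \<eta>" using elim by (simp add: V_def)
    then show ?case by (simp add: dist_norm E2_def V_def s_def)
  qed
qed

end


lemma rep_times: "rep (Y * Z) = (fst (rep Y) o\<^sub>L fst (rep Z), snd (rep Y) * snd (rep Z))"
  by transfer simp

lemma bounded_linear_sn: "bounded_linear (\<lambda>Y::'a::banach opr. snd (rep Y))"
proof
  show "snd (rep (b1 + b2)) = snd (rep b1) + snd (rep b2)" for b1 b2 :: "'a opr" by transfer simp
  show "snd (rep (r *\<^sub>R b)) = r *\<^sub>R snd (rep b)" for r and b :: "'a opr" by transfer simp
  show "\<exists>K. \<forall>x::'a opr. norm (snd (rep x)) \<le> norm x * K" by (rule exI[of _ 1]) (simp add: norm_snd_rep)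
qed

lemma exp_emb: "exp (emb X) = absr (op_exp X, 1)"
proof -
  have s: "summable (\<lambda>n. emb X ^ n /\<^sub>R fact n)" by (rule summable_exp_generic)
  have "snd (rep (exp (emb X))) = (\<Sum>n. snd (rep (emb X ^ n /\<^sub>R fact n)))"
    unfolding exp_def by (simp add: bounded_linear.suminf[OF bounded_linear_sn s])
  also have "\<dots> = (\<Sum>n. (0::real) ^ n /\<^sub>R fact n)"
    unfolding emb_pow by (simp add: absr_inverse scaleR_opr.rep_eq)
  also have "\<dots> = exp (0::real)" by (simp add: exp_def)
  finally have "snd (rep (exp (emb X))) = 1" by simp
  moreover have "fst (rep (exp (emb X))) = op_exp X" by (simp add: op_exp_pr pr_def)
  ultimately have "rep (exp (emb X)) = (op_exp X, 1)" by (simp add: prod_eq_iff)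
  then show ?thesis by (metis rep_inverse)
qed

lemma sandwich: "exp (emb X) * emb A * exp (emb Y) = emb (op_exp X o\<^sub>L A o\<^sub>L op_exp Y)"
  unfolding exp_emb by (simp add: emb_def times_opr.abs_eq)

lemma emb_scaleR: "r *\<^sub>R emb X = emb (r *\<^sub>R X)"
  unfolding emb_def by transfer simp
lemma emb_add: "emb X + emb Y = emb (X + Y)"
  unfolding emb_def by transfer simp
lemma pr_exp: "pr (exp (r *\<^sub>R emb X)) = op_exp (r *\<^sub>R X)"
  by (simp add: emb_scaleR op_exp_pr)

lemma cont_div: "continuous_on X (\<lambda>t::real. t / c)"
  unfolding divide_inverse by (intro continuous_on_mult continuous_on_id continuous_on_const)

lemma C1_emb:
  assumes "D C1_differentiable_on UNIV"
  shows "(\<lambda>t. emb (D t)) C1_differentiable_on UNIV"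
proof -
  obtain D' where dd: "\<And>x. (D has_vector_derivative D' x) (at x)" and cd': "continuous_on UNIV D'"
    using assms unfolding C1_differentiable_on_def by auto
  have "((\<lambda>t. emb (D t)) has_vector_derivative emb (D' x)) (at x)" for x
    by (rule bounded_linear.has_vector_derivative[OF bounded_linear_emb dd])
  moreover have "continuous_on UNIV (\<lambda>x. emb (D' x))"
    by (rule bounded_linear.continuous_on[OF bounded_linear_emb cd'])
  ultimately show ?thesis unfolding C1_differentiable_on_def
    by (intro exI[of _ "\<lambda>x. emb (D' x)"] conjI) auto
qed

lemma cont_C1:
  assumes "D C1_differentiable_on UNIV" shows "continuous_on X D"
proof -
  obtain D' where dd: "\<And>x. (D has_vector_derivative D' x) (at x)"
    using assms unfolding C1_differentiable_on_def by auto
  show ?thesis by (rule continuous_on_vector_derivative) (rule has_vector_derivative_at_within[OF dd])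
qed

theorem lemma4p7:
  fixes A B Anat :: "'a::banach \<Rightarrow>\<^sub>L 'a"
    and D E :: "real \<Rightarrow> ('a \<Rightarrow>\<^sub>L 'a)"
    and \<tau> :: real
  assumes isom: "\<forall>t x. norm (op_exp (t *\<^sub>R B) x) = norm x"
    and Anat: "((\<lambda>t. (1 / t) *\<^sub>R integral {0..t}
                   (\<lambda>u. op_exp (- u *\<^sub>R B) o\<^sub>L A o\<^sub>L op_exp (u *\<^sub>R B)))
               \<longlongrightarrow> Anat) at_top"
    and D: "D C1_differentiable_on UNIV"
    and E: "E C1_differentiable_on UNIV"
    and tau: "\<tau> > 0"
  shows "((\<lambda>\<epsilon>. integral {0..\<tau>}
             (\<lambda>\<tau>1. D \<tau>1 o\<^sub>L op_exp (- (\<tau>1 / \<epsilon>) *\<^sub>R B) o\<^sub>L A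
                    o\<^sub>L op_exp ((\<tau>1 / \<epsilon>) *\<^sub>R B) o\<^sub>L E \<tau>1))
          \<longlongrightarrow> integral {0..\<tau>} (\<lambda>\<tau>1. D \<tau>1 o\<^sub>L Anat o\<^sub>L E \<tau>1)) (at_right 0)
       \<and> ((\<lambda>\<epsilon>. op_exp (- (\<tau> / \<epsilon>) *\<^sub>R B) o\<^sub>L op_exp ((\<tau> / \<epsilon>) *\<^sub>R (B + \<epsilon> *\<^sub>R A)))
          \<longlongrightarrow> op_exp (\<tau> *\<^sub>R Anat)) (at_right 0)
       \<and> ((\<lambda>\<epsilon>. op_exp ((\<tau> / \<epsilon>) *\<^sub>R (B + \<epsilon> *\<^sub>R A)) o\<^sub>L op_exp (- (\<tau> / \<epsilon>) *\<^sub>R B))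
          \<longlongrightarrow> op_exp (\<tau> *\<^sub>R Anat)) (at_right 0)"
proof -
  let ?a = "emb A" and ?b = "emb B" and ?n = "emb Anat"
  have contr: "norm (exp (t *\<^sub>R ?b)) \<le> 1" for t
  proof -
    have "norm (op_exp (t *\<^sub>R B)) \<le> 1"
      using isom by (intro norm_blinfun_bound) auto
    then show ?thesis
      by (simp add: emb_scaleR exp_emb norm_opr.rep_eq absr_inverse)
  qed
  define h where "h u = op_exp (- u *\<^sub>R B) o\<^sub>L A o\<^sub>L op_exp (u *\<^sub>R B)" for u
  have gh: "exp (- u *\<^sub>R ?b) * ?a * exp (u *\<^sub>R ?b) = emb (h u)" for u
    by (simp only: emb_scaleR sandwich h_def)
  have gcont: "continuous_on X (\<lambda>u. exp (- u *\<^sub>R ?b) * ?a * exp (u *\<^sub>R ?b))" for X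
    by (intro continuous_on_mult cont_exp_comp continuous_on_minus continuous_on_id continuous_on_const)
  have hcont: "continuous_on X h" for X
  proof -
    have "continuous_on X (\<lambda>u. pr (exp (- u *\<^sub>R ?b) * ?a * exp (u *\<^sub>R ?b)))"
      by (rule bounded_linear.continuous_on[OF bounded_linear_pr gcont])
    then show ?thesis unfolding gh by simp
  qed
  have lim: "((\<lambda>t. (1 / t) *\<^sub>R integral {0..t} (\<lambda>u. exp (- u *\<^sub>R ?b) * ?a * exp (u *\<^sub>R ?b))) \<longlongrightarrow> ?n) at_top"
  proof -
    have "integral {0..t} (\<lambda>u. exp (- u *\<^sub>R ?b) * ?a * exp (u *\<^sub>R ?b)) = emb (integral {0..t} h)" for t
      unfolding gh using integral_linear[OF integrable_continuous_real[OF hcont] bounded_linear_emb]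
      by (simp add: o_def)
    then have eq: "(\<lambda>t. (1 / t) *\<^sub>R integral {0..t} (\<lambda>u. exp (- u *\<^sub>R ?b) * ?a * exp (u *\<^sub>R ?b)))
        = (\<lambda>t. emb ((1 / t) *\<^sub>R integral {0..t} h))" by (simp add: emb_scaleR)
    have hf: "h = (\<lambda>u. op_exp (- u *\<^sub>R B) o\<^sub>L A o\<^sub>L op_exp (u *\<^sub>R B))" by (simp add: fun_eq_iff h_def)
    show ?thesis unfolding eq
      by (rule bounded_linear.tendsto[OF bounded_linear_emb]) (unfold hf, rule Anat)
  qed
  interpret avg ?a ?b ?n
    by unfold_locales (use contr lim in auto)
  have pe: "pr (exp (r *\<^sub>R emb X)) = op_exp (r *\<^sub>R X)" for r and X :: "'a \<Rightarrow>\<^sub>L 'a"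
    by (simp only: emb_scaleR op_exp_pr[symmetric])
  define G where "G \<epsilon> t = emb (D t) * exp (- (t / \<epsilon>) *\<^sub>R ?b) * ?a * exp ((t / \<epsilon>) *\<^sub>R ?b) * emb (E t)" for \<epsilon> t
  define H where "H t = emb (D t) * ?n * emb (E t)" for t
  have cD: "continuous_on X (\<lambda>t. emb (D t))" for X by (rule cont_C1[OF C1_emb[OF D]])
  have cE: "continuous_on X (\<lambda>t. emb (E t))" for X by (rule cont_C1[OF C1_emb[OF E]])
  have Gc: "continuous_on {0..\<tau>} (G \<epsilon>)" for \<epsilon>
    unfolding G_def[abs_def]
    by (intro continuous_on_mult cD cE cont_exp_comp continuous_on_minus cont_div continuous_on_const)
  have Hc: "continuous_on {0..\<tau>} H"
    unfolding H_def[abs_def] by (intro continuous_on_mult cD cE continuous_on_const)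
  have IG: "pr (integral {0..\<tau>} (G \<epsilon>)) = integral {0..\<tau>}
             (\<lambda>\<tau>1. D \<tau>1 o\<^sub>L op_exp (- (\<tau>1 / \<epsilon>) *\<^sub>R B) o\<^sub>L A
                    o\<^sub>L op_exp ((\<tau>1 / \<epsilon>) *\<^sub>R B) o\<^sub>L E \<tau>1)" for \<epsilon>
  proof -
    have "pr (integral {0..\<tau>} (G \<epsilon>)) = integral {0..\<tau>} (pr \<circ> G \<epsilon>)"
      by (rule integral_linear[OF integrable_continuous_real[OF Gc] bounded_linear_pr, symmetric])
    also have "pr \<circ> G \<epsilon> = (\<lambda>\<tau>1. D \<tau>1 o\<^sub>L op_exp (- (\<tau>1 / \<epsilon>) *\<^sub>R B) o\<^sub>L A
                    o\<^sub>L op_exp ((\<tau>1 / \<epsilon>) *\<^sub>R B) o\<^sub>L E \<tau>1)"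
      by (simp only: o_def G_def pr_mult pr_emb pe)
    finally show ?thesis .
  qed
  have IH: "pr (integral {0..\<tau>} H) = integral {0..\<tau>} (\<lambda>\<tau>1. D \<tau>1 o\<^sub>L Anat o\<^sub>L E \<tau>1)"
  proof -
    have "pr (integral {0..\<tau>} H) = integral {0..\<tau>} (pr \<circ> H)"
      by (rule integral_linear[OF integrable_continuous_real[OF Hc] bounded_linear_pr, symmetric])
    also have "pr \<circ> H = (\<lambda>\<tau>1. D \<tau>1 o\<^sub>L Anat o\<^sub>L E \<tau>1)"
      by (simp only: o_def H_def pr_mult pr_emb)
    finally show ?thesis .
  qed
  have P1: "((\<lambda>\<epsilon>. integral {0..\<tau>} (G \<epsilon>)) \<longlongrightarrow> integral {0..\<tau>} H) (at_right 0)"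
    unfolding G_def[abs_def] H_def[abs_def] by (rule part1[OF C1_emb[OF D] C1_emb[OF E] tau])
  have R1: "((\<lambda>\<epsilon>. integral {0..\<tau>}
             (\<lambda>\<tau>1. D \<tau>1 o\<^sub>L op_exp (- (\<tau>1 / \<epsilon>) *\<^sub>R B) o\<^sub>L A
                    o\<^sub>L op_exp ((\<tau>1 / \<epsilon>) *\<^sub>R B) o\<^sub>L E \<tau>1))
          \<longlongrightarrow> integral {0..\<tau>} (\<lambda>\<tau>1. D \<tau>1 o\<^sub>L Anat o\<^sub>L E \<tau>1)) (at_right 0)"
    using bounded_linear.tendsto[OF bounded_linear_pr P1] unfolding IG IH .
  have pe2: "pr (exp (r *\<^sub>R (emb X + s *\<^sub>R emb Y))) = op_exp (r *\<^sub>R (X + s *\<^sub>R Y))" for r s and X Y :: "'a \<Rightarrow>\<^sub>L 'a"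
    by (simp only: emb_scaleR emb_add op_exp_pr[symmetric])
  have R2: "((\<lambda>\<epsilon>. op_exp (- (\<tau> / \<epsilon>) *\<^sub>R B) o\<^sub>L op_exp ((\<tau> / \<epsilon>) *\<^sub>R (B + \<epsilon> *\<^sub>R A)))
          \<longlongrightarrow> op_exp (\<tau> *\<^sub>R Anat)) (at_right 0)"
    using bounded_linear.tendsto[OF bounded_linear_pr part2a[OF tau]]
    by (simp only: pr_mult pe pe2)
  have R3: "((\<lambda>\<epsilon>. op_exp ((\<tau> / \<epsilon>) *\<^sub>R (B + \<epsilon> *\<^sub>R A)) o\<^sub>L op_exp (- (\<tau> / \<epsilon>) *\<^sub>R B))
          \<longlongrightarrow> op_exp (\<tau> *\<^sub>R Anat)) (at_right 0)"
    using bounded_linear.tendsto[OF bounded_linear_pr part2b[OF tau]]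
    by (simp only: pr_mult pe pe2)
  show ?thesis using R1 R2 R3 by blast
qed

end
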